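(* Let $f(x,y)=x^2y$. Let $t>0$ and let $I=[a,a+3t]$ and $J=[b,b+3t]$ be intervals contained in $[\tfrac23,1]$. Then \[ f(I,J) = f(\ddot I,\ddot J), \] where $\ddot I = [a,a+t]\cup[a+2t,a+3t]$ and $\ddot J=[b,b+t]\cup[b+2t,b+3t]$.
   Context: For sets $A,B\subset\mathbb{R}$, $f(A,B)=\{f(x,y):x\in A, y\in B\}$. *)

theory Defs
  imports Complex_Main
begin

definition image2 :: "(real \<Rightarrow> real \<Rightarrow> real) \<Rightarrow> real set \<Rightarrow> real set \<Rightarrow> real set" where
  "image2 f A B = {f x y | x y. x \<in> A \<and> y \<in> B}"

end

theory Submission
  imports Defs
begin

lemma box_cover:
  fixes x1 x2 y1 y2 v :: real
  assumes "0 < x1" "x1 \<le> x2" "0 < y1" "y1 \<le> y2" "x1^2*y1 \<le> v" "v \<le> x2^2*y2"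
  shows "\<exists>x y. x \<in> {x1..x2} \<and> y \<in> {y1..y2} \<and> v = x^2*y"
proof (cases "v \<le> x2^2*y1")
  case True
  define x where "x = sqrt (v/y1)"
  have v0: "v \<ge> 0" using assms by (meson dual_order.trans mult_nonneg_nonneg less_imp_le zero_le_power2)
  have h1: "x1^2 \<le> v/y1" using assms by (simp add: le_divide_eq)
  have h2: "v/y1 \<le> x2^2" using True assms by (simp add: divide_le_eq)
  have "sqrt (x1^2) \<le> x" unfolding x_def using h1 real_sqrt_le_mono by blast
  hence a1: "x1 \<le> x" using assms by simp
  have "x \<le> sqrt (x2^2)" unfolding x_def using h2 real_sqrt_le_mono by blast
  hence a2: "x \<le> x2" using assms by simp
  have "x^2 = v/y1" unfolding x_def using v0 assms by simp
  hence "v = x^2*y1" using assms by simp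
  thus ?thesis using a1 a2 assms by auto
next
  case False
  define y where "y = v / x2^2"
  have p: "x2^2 > 0" using assms by simp
  have "y1 \<le> y" unfolding y_def using False p by (simp add: le_divide_eq mult.commute)
  moreover have "y \<le> y2" unfolding y_def using assms p by (simp add: divide_le_eq mult.commute)
  moreover have "v = x2^2*y" unfolding y_def using p by simp
  ultimately show ?thesis using assms by auto
qed

lemma diff_aux: fixes X Y t e :: real
  assumes "X - Y = t*e" "e \<ge> 0" "t > 0" shows "Y \<le> X"
proof - have "t*e \<ge> 0" using assms by simp
  thus ?thesis using assms(1) by linarith qed

theorem lemma3p4:
  fixes a b t :: real
  assumes "t > 0"
    and "{a..a + 3*t} \<subseteq> {2/3..1}"
    and "{b..b + 3*t} \<subseteq> {2/3..1}"
  shows "image2 (\<lambda>x y. x^2 * y) {a..a + 3*t} {b..b + 3*t}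
       = image2 (\<lambda>x y. x^2 * y) ({a..a + t} \<union> {a + 2*t..a + 3*t}) ({b..b + t} \<union> {b + 2*t..b + 3*t})"
proof
  have ha: "a \<ge> 2/3" "a + 3*t \<le> 1" using assms by auto
  have hb: "b \<ge> 2/3" "b + 3*t \<le> 1" using assms by auto
  show "image2 (\<lambda>x y. x^2 * y) ({a..a + t} \<union> {a + 2*t..a + 3*t}) ({b..b + t} \<union> {b + 2*t..b + 3*t})
     \<subseteq> image2 (\<lambda>x y. x^2 * y) {a..a + 3*t} {b..b + 3*t}"
    unfolding image2_def using assms(1) by auto (fastforce+)
  show "image2 (\<lambda>x y. x^2 * y) {a..a + 3*t} {b..b + 3*t}
     \<subseteq> image2 (\<lambda>x y. x^2 * y) ({a..a + t} \<union> {a + 2*t..a + 3*t}) ({b..b + t} \<union> {b + 2*t..b + 3*t})"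
  proof
    fix v assume "v \<in> image2 (\<lambda>x y. x^2 * y) {a..a + 3*t} {b..b + 3*t}"
    then obtain x y where xy: "x \<in> {a..a+3*t}" "y \<in> {b..b+3*t}" "v = x^2*y"
      unfolding image2_def by auto
    have lo: "a^2*b \<le> v" unfolding xy(3)
      using xy ha hb by (intro mult_mono power_mono) auto
    have hi: "v \<le> (a+3*t)^2*(b+3*t)" unfolding xy(3)
      using xy ha hb by (intro mult_mono power_mono) auto
    have c1: "a^2*(b+2*t) \<le> (a+t)^2*(b+t)"
    proof -
      have eq: "(a+t)^2*(b+t) - a^2*(b+2*t) = t*((2*a+t)*(b+t) - a^2)" by (simp add: algebra_simps power2_eq_square)
      moreover have "(2*a+t)*(b+t) - a^2 \<ge> 0"
      proof -
        have "a*(2*b - a) \<ge> 0" using ha hb assms(1) by (intro mult_nonneg_nonneg) auto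
        moreover have "(2*a+t)*(b+t) \<ge> 2*a*b" using ha hb assms(1) by (simp add: algebra_simps)
        ultimately show ?thesis by (simp add: algebra_simps power2_eq_square)
      qed
      ultimately show ?thesis using diff_aux[OF eq _ assms(1)] by blast
    qed
    have c2: "(a+2*t)^2*b \<le> (a+t)^2*(b+3*t)"
    proof -
      have eq: "(a+t)^2*(b+3*t) - (a+2*t)^2*b = t*(a*(3*a - 2*b) + 3*t*(2*a+t-b))"
        by (simp add: algebra_simps power2_eq_square)
      moreover have "a*(3*a - 2*b) \<ge> 0" using ha hb assms(1) by (intro mult_nonneg_nonneg) auto
      moreover have "3*t*(2*a+t-b) \<ge> 0" using ha hb assms(1) by simp
      ultimately have "a*(3*a - 2*b) + 3*t*(2*a+t-b) \<ge> 0" by linarith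
      thus ?thesis using diff_aux[OF eq _ assms(1)] by blast
    qed
    have c3: "(a+2*t)^2*(b+2*t) \<le> (a+3*t)^2*(b+t)"
    proof -
      have eq: "(a+3*t)^2*(b+t) - (a+2*t)^2*(b+2*t) = t*(a*(2*b-a) + 5*b*t - 2*a*t + t^2)"
        by (simp add: algebra_simps power2_eq_square)
      moreover have "a*(2*b-a) \<ge> 2/9"
      proof -
        have "2*b - a \<ge> 1/3" using ha hb assms(1) by simp
        hence "a*(2*b-a) \<ge> (2/3)*(1/3)" using ha by (intro mult_mono) auto
        thus ?thesis by simp
      qed
      moreover have "2*a*t \<le> 2/9"
      proof -
        have "a*t \<le> 1*(1/9)" using ha assms(1) by (intro mult_mono) auto
        thus ?thesis by simp
      qed
      moreover have "5*b*t \<ge> 0" using hb assms(1) by simp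
      moreover have "t^2 \<ge> 0" by simp
      ultimately have "a*(2*b-a) + 5*b*t - 2*a*t + t^2 \<ge> 0" by linarith
      thus ?thesis using diff_aux[OF eq _ assms(1)] by blast
    qed
    have apos: "a > 0" "b > 0" using ha hb by auto
    let ?A = "{a..a + t} \<union> {a + 2*t..a + 3*t}" and ?B = "{b..b + t} \<union> {b + 2*t..b + 3*t}"
    have "\<exists>x y. x \<in> ?A \<and> y \<in> ?B \<and> v = x^2*y"
    proof -
      consider "v \<le> (a+t)^2*(b+t)" | "(a+t)^2*(b+t) < v" "v \<le> (a+t)^2*(b+3*t)"
        | "(a+t)^2*(b+3*t) < v" "v \<le> (a+3*t)^2*(b+t)" | "(a+3*t)^2*(b+t) < v" by linarith
      then show ?thesis
      proof cases
        case 1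
        from box_cover[of a "a+t" b "b+t" v] 1 lo apos assms(1) show ?thesis by auto
      next
        case 2
        from box_cover[of a "a+t" "b+2*t" "b+3*t" v] 2 c1 apos assms(1) show ?thesis by auto
      next
        case 3
        from box_cover[of "a+2*t" "a+3*t" b "b+t" v] 3 c2 apos assms(1) show ?thesis by auto
      next
        case 4
        from box_cover[of "a+2*t" "a+3*t" "b+2*t" "b+3*t" v] 4 c3 hi apos assms(1) show ?thesis by auto
      qed
    qed
    thus "v \<in> image2 (\<lambda>x y. x^2 * y) ?A ?B" unfolding image2_def by auto
  qed
qed

end
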